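(* Let $r \geq 0$ and $k \geq 2$ be integers. Then the treewidth of the primal graph of the CNF $F_{r,k}$ is at most $2k-1$.
   Context: For a graph $G$, the CNF $CNF(G)$ has a variable $X_u$ for each vertex $u \in V(G)$ and a variable $X_{u,v}=X_{v,u}$ for each edge $\{u,v\} \in E(G)$; its clauses are $(X_u \vee X_{u,v} \vee X_v)$, one for each edge $\{u,v\} \in E(G)$. Let $T_r$ be the complete binary tree of height $r$ (it has $2^{r+1}-1$ nodes). $CT_{r,k}$ is the graph obtained from $T_r$ by replacing each node by a clique on $k$ vertices and, for every edge $\{a,b\}$ of $T_r$, making every vertex of the clique of $a$ adjacent to every vertex of the clique of $b$. $F_{r,k}=CNF(CT_{r,k})$. The primal graph of a CNF has the variables as vertices, two being adjacent iff they occur together in some clause. *)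

theory Defs
  imports Main
begin

type_synonym 'a graph = "'a set \<times> 'a set set"

definition verts :: "'a graph \<Rightarrow> 'a set" where "verts G = fst G"
definition edges :: "'a graph \<Rightarrow> 'a set set" where "edges G = snd G"

definition simple_graph :: "'a graph \<Rightarrow> bool" where
  "simple_graph G \<longleftrightarrow> finite (verts G) \<and>
     (\<forall>e\<in>edges G. e \<subseteq> verts G \<and> card e = 2)"

definition connected_in :: "'a graph \<Rightarrow> 'a set \<Rightarrow> bool" where
  "connected_in G S \<longleftrightarrow>
     (\<forall>x\<in>S. \<forall>y\<in>S. (x, y) \<in> {(a, b). {a, b} \<in> edges G \<and> a \<in> S \<and> b \<in> S}\<^sup>*)"

definition is_tree :: "'a graph \<Rightarrow> bool" where
  "is_tree T \<longleftrightarrow> simple_graph T \<and> verts T \<noteq> {} \<and>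
     connected_in T (verts T) \<and> card (edges T) = card (verts T) - 1"

definition tree_decomposition :: "'a graph \<Rightarrow> nat graph \<Rightarrow> (nat \<Rightarrow> 'a set) \<Rightarrow> bool" where
  "tree_decomposition G T B \<longleftrightarrow> is_tree T \<and>
     (\<forall>t\<in>verts T. B t \<subseteq> verts G) \<and>
     (\<forall>v\<in>verts G. \<exists>t\<in>verts T. v \<in> B t) \<and>
     (\<forall>e\<in>edges G. \<exists>t\<in>verts T. e \<subseteq> B t) \<and>
     (\<forall>v\<in>verts G. connected_in T {t\<in>verts T. v \<in> B t})"

definition decomposition_width :: "nat graph \<Rightarrow> (nat \<Rightarrow> 'a set) \<Rightarrow> nat" where
  "decomposition_width T B = Max ((\<lambda>t. card (B t)) ` verts T) - 1"

definition treewidth :: "'a graph \<Rightarrow> nat" where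
  "treewidth G = (LEAST w. \<exists>T B. tree_decomposition G T B \<and> decomposition_width T B = w)"

text \<open>CNF formulas: a CNF is a set of clauses, a clause a set of literals,
  a literal a pair (variable, polarity).\<close>
type_synonym 'v cnf = "('v \<times> bool) set set"

definition cnf_vars :: "'v cnf \<Rightarrow> 'v set" where
  "cnf_vars F = (\<Union>C\<in>F. fst ` C)"

definition primal_graph :: "'v cnf \<Rightarrow> 'v graph" where
  "primal_graph F = (cnf_vars F,
     {{x, y} | x y. x \<noteq> y \<and> (\<exists>C\<in>F. x \<in> fst ` C \<and> y \<in> fst ` C)})"

text \<open>Variables of CNF(G): X_u for vertices and X_{u,v} = X_{v,u} for edges.\<close>
datatype 'a gvar = VVar 'a | EVar "'a set"

definition CNF_of_graph :: "'a graph \<Rightarrow> 'a gvar cnf" where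
  "CNF_of_graph G = {{(VVar u, True), (EVar {u, v}, True), (VVar v, True)} | u v.
                      {u, v} \<in> edges G}"

definition bintree :: "nat \<Rightarrow> nat graph" where
  "bintree r = ({1..<2^(r+1)},
     {{i, c} | i c. 1 \<le> i \<and> c < 2^(r+1) \<and> (c = 2*i \<or> c = 2*i+1)})"

text \<open>CT_{r,k}: each tree node a replaced by the clique {a} x {0..<k}; cliques of
  adjacent tree nodes completely joined.\<close>
definition CT :: "nat \<Rightarrow> nat \<Rightarrow> (nat \<times> nat) graph" where
  "CT r k = (verts (bintree r) \<times> {..<k},
     {{(a, i), (b, j)} | a b i j. a \<in> verts (bintree r) \<and> b \<in> verts (bintree r) \<and>
        i < k \<and> j < k \<and> (a, i) \<noteq> (b, j) \<and> (a = b \<or> {a, b} \<in> edges (bintree r))})"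

definition F :: "nat \<Rightarrow> nat \<Rightarrow> (nat \<times> nat) gvar cnf" where
  "F r k = CNF_of_graph (CT r k)"

end

theory Submission
  imports Defs
begin

definition nd :: "(nat \<times> nat) set \<Rightarrow> nat" where "nd e = Max (fst ` e)"

lemma ct_edge:
  assumes "e \<in> edges (CT r k)"
  shows "finite e \<and> card e \<le> 2 \<and> 1 \<le> nd e \<and> nd e < 2^(r+1) \<and>
         e \<subseteq> {nd e, max 1 (nd e div 2)} \<times> {..<k}"
proof -
  obtain a b i j where e: "e = {(a,i),(b,j)}" and ab0: "a \<in> verts (bintree r)" "b \<in> verts (bintree r)"
    and ij: "i < k" "j < k" and rel: "a = b \<or> {a,b} \<in> edges (bintree r)"
    using assms unfolding CT_def edges_def snd_conv mem_Collect_eq by blast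
  have ab: "a \<in> {1..<2^(r+1)}" "b \<in> {1..<2^(r+1)}" using ab0 by (auto simp: bintree_def verts_def)
  have fe: "finite e" "card e \<le> 2" using e by (auto simp: card_insert_le_m1)
  show ?thesis
  proof (cases "a = b")
    case True
    then have "fst ` e = {a}" using e by auto
    then have "nd e = a" by (simp add: nd_def)
    then show ?thesis using fe e ab ij True by auto
  next
    case False
    then obtain p c where pc: "{a,b} = {p,c}" "1 \<le> p" "c = 2*p \<or> c = 2*p+1"
      using rel unfolding bintree_def edges_def by auto
    have "fst ` e = {p,c}" using e pc(1) by auto
    moreover have "p < c" using pc by auto
    ultimately have "nd e = c" by (simp add: nd_def max_def)
    moreover have "c div 2 = p" using pc by auto
    moreover have "max 1 p = p" using pc by auto
    ultimately show ?thesis using fe e ab ij pc(1)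
      by (auto simp: doubleton_eq_iff)
  qed
qed

lemma connected_via:
  assumes "c \<in> S" and "\<And>x. x \<in> S \<Longrightarrow> (x, c) \<in> {(a, b). {a, b} \<in> edges G \<and> a \<in> S \<and> b \<in> S}\<^sup>*"
  shows "connected_in G S"
proof -
  let ?R = "{(a, b). {a, b} \<in> edges G \<and> a \<in> S \<and> b \<in> S}"
  have "sym ?R" by (auto simp: sym_def insert_commute)
  then have s: "sym (?R\<^sup>*)" by (rule sym_rtrancl)
  show ?thesis unfolding connected_in_def
  proof (intro ballI)
    fix x y assume "x \<in> S" "y \<in> S"
    then have "(x,c) \<in> ?R\<^sup>*" "(c,y) \<in> ?R\<^sup>*" using assms s by (auto dest: symD)
    then show "(x,y) \<in> ?R\<^sup>*" by (rule rtrancl_trans)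
  qed
qed

lemma tree_from_parent:
  fixes V :: "nat set" and par :: "nat \<Rightarrow> nat"
  assumes fin: "finite V" and rho: "\<rho> \<in> V" and p: "\<And>x. x \<in> V - {\<rho>} \<Longrightarrow> par x \<in> V \<and> par x < x"
  shows "is_tree (V, (\<lambda>x. {x, par x}) ` (V - {\<rho>}))"
proof -
  let ?T = "(V, (\<lambda>x. {x, par x}) ` (V - {\<rho>}))"
  have sg: "simple_graph ?T"
    unfolding simple_graph_def verts_def edges_def using fin p
    by (auto simp: card_insert_if) (metis less_irrefl)
  have inj: "inj_on (\<lambda>x. {x, par x}) (V - {\<rho>})"
  proof (rule inj_onI)
    fix x y assume x: "x \<in> V - {\<rho>}" and y: "y \<in> V - {\<rho>}" and eq: "{x, par x} = {y, par y}"
    show "x = y"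
    proof (rule ccontr)
      assume "x \<noteq> y"
      then have "x = par y" "y = par x" using eq by (auto simp: doubleton_eq_iff)
      then show False using p[OF x] p[OF y] by simp
    qed
  qed
  have card: "card (edges ?T) = card (verts ?T) - 1"
    unfolding edges_def verts_def using card_image[OF inj] fin rho by simp
  let ?R = "{(a, b). {a, b} \<in> edges ?T \<and> a \<in> V \<and> b \<in> V}"
  have reach: "x \<in> V \<Longrightarrow> (x, \<rho>) \<in> ?R\<^sup>*" for x
  proof (induction x rule: less_induct)
    case (less x)
    show ?case
    proof (cases "x = \<rho>")
      case True then show ?thesis by simp
    next
      case False
      then have x: "x \<in> V - {\<rho>}" using less.prems by simp
      have "(x, par x) \<in> ?R" using x p[OF x] by (auto simp: edges_def)
      moreover have "(par x, \<rho>) \<in> ?R\<^sup>*" using less.IH p[OF x] by simp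
      ultimately show ?thesis by (rule converse_rtrancl_into_rtrancl)
    qed
  qed
  have "connected_in ?T (verts ?T)"
    unfolding verts_def fst_conv by (rule connected_via[OF rho]) (use reach in \<open>simp add: verts_def\<close>)
  then show ?thesis using sg card rho unfolding is_tree_def verts_def by auto
qed

lemma verts_G:
  "verts (primal_graph (F r k)) = (\<Union>e\<in>edges (CT r k). insert (EVar e) (VVar ` e))"
proof -
  have f: "fst ` {(VVar u, True), (EVar {u, v}, True), (VVar v, True)} = insert (EVar {u,v}) (VVar ` {u,v})" for u v :: "nat \<times> nat"
    by auto
  have eq: "verts (primal_graph (F r k)) = (\<Union>C\<in>F r k. fst ` C)"
    unfolding primal_graph_def verts_def fst_conv cnf_vars_def by simp
  show ?thesis
  proof
    show "verts (primal_graph (F r k)) \<subseteq> (\<Union>e\<in>edges (CT r k). insert (EVar e) (VVar ` e))"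
    proof
      fix x assume "x \<in> verts (primal_graph (F r k))"
      then obtain C where C: "C \<in> F r k" "x \<in> fst ` C" using eq by auto
      obtain u v where uv: "C = {(VVar u, True), (EVar {u, v}, True), (VVar v, True)}" "{u,v} \<in> edges (CT r k)"
        using C(1) unfolding F_def CNF_of_graph_def by blast
      have "x \<in> insert (EVar {u,v}) (VVar ` {u,v})" using C(2) uv(1) by auto
      then show "x \<in> (\<Union>e\<in>edges (CT r k). insert (EVar e) (VVar ` e))" using uv(2) by (rule UN_I[rotated])
    qed
  next
    show "(\<Union>e\<in>edges (CT r k). insert (EVar e) (VVar ` e)) \<subseteq> verts (primal_graph (F r k))"
    proof
      fix x assume "x \<in> (\<Union>e\<in>edges (CT r k). insert (EVar e) (VVar ` e))"
      then obtain e where e: "e \<in> edges (CT r k)" "x \<in> insert (EVar e) (VVar ` e)" by auto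
      obtain u v where uv: "e = {u,v}"
        using e(1) unfolding CT_def edges_def snd_conv mem_Collect_eq by blast
      have "{(VVar u, True), (EVar {u, v}, True), (VVar v, True)} \<in> F r k"
        unfolding F_def CNF_of_graph_def using e(1) uv by blast
      moreover have "x \<in> fst ` {(VVar u, True), (EVar {u, v}, True), (VVar v, True)}" using e(2) uv by auto
      ultimately show "x \<in> verts (primal_graph (F r k))" unfolding eq by (rule UN_I)
    qed
  qed
qed

lemma edges_G:
  assumes "x \<in> edges (primal_graph (F r k))"
  shows "\<exists>e\<in>edges (CT r k). x \<subseteq> insert (EVar e) (VVar ` e)"
proof -
  have f: "fst ` {(VVar u, True), (EVar {u, v}, True), (VVar v, True)} = insert (EVar {u,v}) (VVar ` {u,v})" for u v :: "nat \<times> nat"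
    by auto
  obtain a b C where x: "x = {a,b}" and C: "C \<in> F r k" "a \<in> fst ` C" "b \<in> fst ` C"
    using assms unfolding primal_graph_def edges_def snd_conv by blast
  obtain u v where uv: "C = {(VVar u, True), (EVar {u, v}, True), (VVar v, True)}" "{u,v} \<in> edges (CT r k)"
    using C(1) unfolding F_def CNF_of_graph_def by blast
  have "x \<subseteq> insert (EVar {u,v}) (VVar ` {u,v})" using C(2,3) x uv(1) by auto
  then show ?thesis using uv(2) by blast
qed

theorem lemma1:
  fixes r k :: nat
  assumes "k \<ge> 2"
  shows "treewidth (primal_graph (F r k)) \<le> 2 * k - 1"
proof -
  define N :: nat where "N = 2^(r+1)"
  have N2: "N \<ge> 2" unfolding N_def
  proof -
    have "(2::nat)^1 \<le> 2^(r+1)" by (rule power_increasing) auto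
    then show "2 \<le> (2::nat)^(r+1)" by simp
  qed
  define L where "L = edges (CT r k)"
  define G where "G = primal_graph (F r k)"
  have ctL: "\<And>e. e \<in> L \<Longrightarrow> finite e \<and> card e \<le> 2 \<and> 1 \<le> nd e \<and> nd e < N \<and>
         e \<subseteq> {nd e, max 1 (nd e div 2)} \<times> {..<k}"
    unfolding L_def N_def by (rule ct_edge)
  have "L \<subseteq> Pow ({..<N} \<times> {..<k})"
  proof
    fix e assume e: "e \<in> L"
    have "max 1 (nd e div 2) < N" using ctL[OF e] by auto
    then show "e \<in> Pow ({..<N} \<times> {..<k})" using ctL[OF e] by auto
  qed
  then have finL: "finite L" by (rule finite_subset) auto
  obtain g :: "(nat \<times> nat) set \<Rightarrow> nat" and n where g: "g ` L = {i. i < n}" "inj_on g L"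
    using finite_imp_inj_to_nat_seg[OF finL] by blast
  define l where "l e = N + g e" for e
  have injl: "inj_on l L" using g(2) unfolding l_def inj_on_def by auto
  have lN: "l e \<ge> N" for e unfolding l_def by simp
  have invl: "e \<in> L \<Longrightarrow> inv_into L l (l e) = e" for e using injl by (rule inv_into_f_f)
  define V where "V = {1..<N} \<union> l ` L"
  define par where "par x = (if x < N then x div 2 else nd (inv_into L l x))" for x
  define T where "T = (V, (\<lambda>x. {x, par x}) ` (V - {1}))"
  define B where "B t = (if t < N then VVar ` ({t, max 1 (t div 2)} \<times> {..<k})
                         else insert (EVar (inv_into L l t)) (VVar ` inv_into L l t))" for t
  have Bl: "e \<in> L \<Longrightarrow> B (l e) = insert (EVar e) (VVar ` e)" for e
    using lN[of e] invl[of e] unfolding B_def by auto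
  have tN: "t \<in> {1..<N}" if "t \<in> V" "t < N" for t
  proof -
    have "t \<notin> l ` L" using that(2) lN by (metis imageE not_le)
    then show ?thesis using that unfolding V_def by auto
  qed
  have finV: "finite V" unfolding V_def using finL by simp
  have oneV: "1 \<in> V" unfolding V_def using N2 by simp
  have parV: "par x \<in> V \<and> par x < x" if x: "x \<in> V - {1}" for x
  proof (cases "x < N")
    case True
    have "x \<notin> l ` L" using True lN by (metis imageE not_le)
    then have "x \<ge> 2" using x unfolding V_def by auto
    then show ?thesis using True unfolding par_def V_def by auto
  next
    case False
    then obtain e where e: "e \<in> L" "x = l e" using x unfolding V_def by auto
    then have "par x = nd e" unfolding par_def using False invl by simp
    then show ?thesis using ctL[OF e(1)] False unfolding V_def by auto
  qed
  have treeT: "is_tree T" unfolding T_def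
    by (rule tree_from_parent[OF finV oneV parV])
  have edgeT: "x \<in> V - {1} \<Longrightarrow> {x, par x} \<in> edges T" for x unfolding T_def edges_def by simp
  have vT: "verts T = V" unfolding T_def verts_def by simp
  have vG: "verts G = (\<Union>e\<in>L. insert (EVar e) (VVar ` e))"
    unfolding G_def L_def by (rule verts_G)
  have VVarG: "VVar (a,i) \<in> verts G" if "a \<in> {1..<N}" "i < k" for a i
  proof -
    define j where "j = (if i = 0 then 1 else (0::nat))"
    have "j < k" "j \<noteq> i" using assms unfolding j_def by auto
    then have "{(a,i),(a,j)} \<in> L" unfolding L_def CT_def edges_def snd_conv mem_Collect_eq
      using that unfolding bintree_def verts_def N_def by fastforce
    then show ?thesis unfolding vG by blast
  qed
  have VVarG': "a \<in> {1..<N} \<and> i < k" if "VVar (a,i) \<in> verts G" for a i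
  proof -
    have "VVar (a,i) \<in> (\<Union>e\<in>L. insert (EVar e) (VVar ` e))" using that unfolding vG .
    then obtain e where "e \<in> L" "VVar (a,i) \<in> insert (EVar e) (VVar ` e)" by blast
    then have "e \<in> L" "(a,i) \<in> e" by auto
    then show ?thesis using ctL[of e] by fastforce
  qed
  have td: "tree_decomposition G T B"
    unfolding tree_decomposition_def vT
  proof (intro conjI ballI)
    show "is_tree T" by (rule treeT)
  next
    fix t assume t: "t \<in> V"
    show "B t \<subseteq> verts G"
    proof (cases "t < N")
      case True
      then have "t \<in> {1..<N}" "max 1 (t div 2) \<in> {1..<N}" using tN[OF t] by auto
      then show ?thesis using True VVarG unfolding B_def by auto
    next
      case False
      then obtain e where e: "e \<in> L" "t = l e" using t unfolding V_def by auto
      then show ?thesis using Bl unfolding vG by auto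
    qed
  next
    fix v assume "v \<in> verts G"
    then obtain e where e: "e \<in> L" "v \<in> insert (EVar e) (VVar ` e)" unfolding vG by auto
    then show "\<exists>t\<in>V. v \<in> B t" using Bl[OF e(1)] unfolding V_def by blast
  next
    fix x assume "x \<in> edges G"
    then obtain e where "e \<in> L" "x \<subseteq> insert (EVar e) (VVar ` e)"
      using edges_G unfolding G_def L_def by blast
    then show "\<exists>t\<in>V. x \<subseteq> B t" using Bl unfolding V_def by blast
  next
    fix v assume vG': "v \<in> verts G"
    show "connected_in T {t \<in> V. v \<in> B t}"
    proof (cases v)
      case (EVar e)
      then have e: "e \<in> L" using vG' unfolding vG by auto
      have "{t \<in> V. v \<in> B t} = {l e}"
      proof
        show "{l e} \<subseteq> {t \<in> V. v \<in> B t}" using e Bl EVar unfolding V_def by auto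
        show "{t \<in> V. v \<in> B t} \<subseteq> {l e}"
        proof
          fix t assume t: "t \<in> {t \<in> V. v \<in> B t}"
          then have "\<not> t < N" using EVar unfolding B_def by auto
          then obtain e' where e': "e' \<in> L" "t = l e'" using t unfolding V_def by auto
          then have "e' = e" using t Bl[OF e'(1)] EVar by auto
          then show "t \<in> {l e}" using e' by simp
        qed
      qed
      then show ?thesis by (auto intro: connected_via)
    next
      case (VVar u)
      obtain a i where u: "u = (a,i)" by (cases u)
      have ai: "a \<in> {1..<N}" "i < k" using VVarG' vG' VVar u by auto
      let ?S = "{t \<in> V. v \<in> B t}"
      let ?R = "{(x, y). {x, y} \<in> edges T \<and> x \<in> ?S \<and> y \<in> ?S}"
      have aS: "a \<in> ?S" using ai VVar u unfolding V_def B_def by auto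
      have small: "(x, a) \<in> ?R\<^sup>*" if x: "x \<in> ?S" "x < N" for x
      proof (cases "x = a")
        case True then show ?thesis by simp
      next
        case False
        have "(a,i) \<in> {x, max 1 (x div 2)} \<times> {..<k}" using x VVar u unfolding B_def by auto
        then have a: "a = max 1 (x div 2)" using False by auto
        then have "x \<noteq> 1" using False by auto
        then have "x \<in> V - {1}" using x by auto
        moreover have "par x = a" using a x \<open>x \<noteq> 1\<close> tN[of x] unfolding par_def
          by (cases "x div 2 = 0") auto
        ultimately have "(x, a) \<in> ?R" using edgeT[of x] x aS by auto
        then show ?thesis by auto
      qed
      show ?thesis
      proof (rule connected_via[OF aS])
        fix x assume x: "x \<in> ?S"
        show "(x, a) \<in> ?R\<^sup>*"
        proof (cases "x < N")
          case True then show ?thesis using small x by auto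
        next
          case False
          then obtain e where e: "e \<in> L" "x = l e" using x unfolding V_def by auto
          have "(a,i) \<in> e" using x Bl[OF e(1)] e(2) VVar u by auto
          then have ain: "a \<in> {nd e, max 1 (nd e div 2)}" using ctL[OF e(1)] by auto
          have pS: "nd e \<in> ?S" using ctL[OF e(1)] ain ai VVar u unfolding V_def B_def by auto
          have xV: "x \<in> V - {1}" using x False N2 by auto
          have "par x = nd e" using False e invl unfolding par_def by simp
          then have "(x, nd e) \<in> ?R" using edgeT[OF xV] x pS by auto
          moreover have "(nd e, a) \<in> ?R\<^sup>*" using small[OF pS] ctL[OF e(1)] by auto
          ultimately show ?thesis by (rule converse_rtrancl_into_rtrancl)
        qed
      qed
    qed
  qed
  have bags: "card (B t) \<le> 2 * k" if t: "t \<in> V" for t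
  proof (cases "t < N")
    case True
    have "card (B t) \<le> card ({t, max 1 (t div 2)} \<times> {..<k})"
      using True unfolding B_def by (simp only: if_True) (rule card_image_le, simp)
    also have "\<dots> = card {t, max 1 (t div 2)} * k" by (simp add: card_cartesian_product)
    also have "\<dots> \<le> 2 * k" by (simp add: card_insert_le_m1)
    finally show ?thesis .
  next
    case False
    then obtain e where e: "e \<in> L" "t = l e" using t unfolding V_def by auto
    have "card (B t) \<le> Suc (card (VVar ` e))" using Bl[OF e(1)] e(2) by (simp add: card_insert_le_m1 card_insert_if)
    also have "\<dots> \<le> Suc (card e)" using card_image_le ctL[OF e(1)] by auto
    also have "\<dots> \<le> 2 * k" using ctL[OF e(1)] assms by auto
    finally show ?thesis .
  qed
  have "(MAX t\<in>V. card (B t)) \<le> 2 * k"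
    using bags finV oneV by (subst Max_le_iff) auto
  then have "decomposition_width T B \<le> 2 * k - 1"
    unfolding decomposition_width_def vT by simp
  moreover have "treewidth G \<le> decomposition_width T B"
    unfolding treewidth_def by (rule Least_le) (use td in blast)
  ultimately show ?thesis unfolding G_def by simp
qed

end
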